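(* Let $\lambda,\mu$ be partitions with $|\mu|=|\lambda|$ and $d(\lambda,\mu)=2$, and write $S_\lambda\setminus S_\mu=\{\lambda_a-a+\frac12,\lambda_b-b+\frac12\}$ and $S_\mu\setminus S_\lambda=\{\mu_{a'}-a'+\frac12,\mu_{b'}-b'+\frac12\}$ with $1\le a<b$ and $1\le a'<b'$. Then there exist exactly two pairs $(\gamma,\gamma')$ with $\gamma$ a border strip of $\lambda$, $\gamma'$ a border strip of $\mu$ and $\lambda\setminus\gamma=\mu\setminus\gamma'$; denoting them $(\gamma_1,\gamma_1')$ and $(\gamma_2,\gamma_2')$ suitably, they satisfy: (i) $\gamma_1\subset\gamma_2$ and $\gamma_1'\subset\gamma_2'$; (ii) $|\gamma_1|=|\gamma_1'|=|\lambda_a-a-\mu_{a'}+a'|$ and $|\gamma_2|=|\gamma_2'|=|\lambda_a-a-\mu_{b'}+b'|$; (iii) if $\lambda_a-a>\mu_{a'}-a'$, then $\mathrm{ht}(\gamma_1)=a'-a$, $\mathrm{ht}(\gamma_1')=b-b'$, $\mathrm{ht}(\gamma_2)=b'-a-1$, $\mathrm{ht}(\gamma_2')=b-a'$; and if $\lambda_a-a<\mu_{a'}-a'$, then $\mathrm{ht}(\gamma_1)=b'-b$, $\mathrm{ht}(\gamma_1')=a-a'$, $\mathrm{ht}(\gamma_2)=b'-a$, $\mathrm{ht}(\gamma_2')=b-a'-1$.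
   Context: Partitions $\lambda=(\lambda_1\ge\lambda_2\ge\dots)$, with $\lambda_j=0$ beyond the length; $|\lambda|$ is the size, $\lambda'$ the transpose; $S_\lambda=\{\lambda_j-j+\frac12:j\ge1\}$. Modified Frobenius coordinates: if $d$ is the number of $i$ with $\lambda_i\ge i$, $c_i=\lambda_i-i+\frac12$, $c_i^*=-(\lambda'_i-i)-\frac12$, $C_\lambda=\{c_1,\dots,c_d,c_1^*,\dots,c_d^*\}$; Hamming distance $d(\lambda,\mu)=\frac12|C_\lambda\,\Delta\,C_\mu|$ (when $d(\lambda,\mu)=2$ one has $|S_\lambda\setminus S_\mu|=|S_\mu\setminus S_\lambda|=2$, so the indices $a,b,a',b'$ exist). Young diagram $Y_\lambda=\{(x,y):1\le y\le\lambda_x\}$. For partitions $\sigma$ with $Y_\sigma\subset Y_\lambda$, the skew diagram $\gamma=\lambda/\sigma$ is a border strip of $\lambda$ if it is edge-connected and contains no $2\times2$ block; then $\lambda\setminus\gamma:=\sigma$, $|\gamma|$ is the number of cells and $\mathrm{ht}(\gamma)$ is the number of rows it meets minus one. Inclusion $\gamma_1\subset\gamma_2$ is inclusion of sets of cells. *)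

theory Defs
  imports Complex_Main
begin

definition is_partition :: "nat list \<Rightarrow> bool" where
  "is_partition xs \<longleftrightarrow> sorted (rev xs) \<and> 0 \<notin> set xs"

definition part :: "nat list \<Rightarrow> nat \<Rightarrow> nat" where
  "part xs j = (if 1 \<le> j \<and> j \<le> length xs then xs ! (j - 1) else 0)"

definition psize :: "nat list \<Rightarrow> nat" where
  "psize xs = sum_list xs"

definition conj_part :: "nat list \<Rightarrow> nat \<Rightarrow> nat" where
  "conj_part xs i = card {x. 1 \<le> x \<and> i \<le> part xs x \<and> x \<le> length xs}"

definition S_set :: "nat list \<Rightarrow> real set" where
  "S_set xs = {real (part xs j) - real j + 1/2 | j. j \<ge> 1}"

definition frob_d :: "nat list \<Rightarrow> nat" where
  "frob_d xs = card {i. 1 \<le> i \<and> i \<le> part xs i}"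

definition C_set :: "nat list \<Rightarrow> real set" where
  "C_set xs = {real (part xs i) - real i + 1/2 | i. 1 \<le> i \<and> i \<le> frob_d xs}
            \<union> {- (real (conj_part xs i) - real i) - 1/2 | i. 1 \<le> i \<and> i \<le> frob_d xs}"

definition hamming :: "nat list \<Rightarrow> nat list \<Rightarrow> nat" where
  "hamming xs ys = card ((C_set xs - C_set ys) \<union> (C_set ys - C_set xs)) div 2"

definition young :: "nat list \<Rightarrow> (nat \<times> nat) set" where
  "young xs = {(x, y). 1 \<le> x \<and> 1 \<le> y \<and> y \<le> part xs x}"

definition cell_adj :: "(nat \<times> nat) set \<Rightarrow> nat \<times> nat \<Rightarrow> nat \<times> nat \<Rightarrow> bool" where
  "cell_adj G c d \<longleftrightarrow> c \<in> G \<and> d \<in> G \<and>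
     ((fst c = fst d \<and> (snd d = snd c + 1 \<or> snd c = snd d + 1)) \<or>
      (snd c = snd d \<and> (fst d = fst c + 1 \<or> fst c = fst d + 1)))"

definition edge_connected :: "(nat \<times> nat) set \<Rightarrow> bool" where
  "edge_connected G \<longleftrightarrow> (\<forall>c\<in>G. \<forall>d\<in>G. (cell_adj G)\<^sup>*\<^sup>* c d)"

definition no_2x2 :: "(nat \<times> nat) set \<Rightarrow> bool" where
  "no_2x2 G \<longleftrightarrow> \<not> (\<exists>x y. (x, y) \<in> G \<and> (x + 1, y) \<in> G \<and> (x, y + 1) \<in> G \<and> (x + 1, y + 1) \<in> G)"

definition border_strip :: "nat list \<Rightarrow> (nat \<times> nat) set \<Rightarrow> bool" where
  "border_strip lam G \<longleftrightarrow>
     (\<exists>sigma. is_partition sigma \<and> young sigma \<subseteq> young lam \<and> G = young lam - young sigma)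
     \<and> G \<noteq> {} \<and> edge_connected G \<and> no_2x2 G"

definition ht :: "(nat \<times> nat) set \<Rightarrow> int" where
  "ht G = int (card (fst ` G)) - 1"

end

theory Submission
  imports Defs
begin


definition fv :: "nat list \<Rightarrow> nat \<Rightarrow> int" where
  "fv xs j = int (part xs j) - int j"

definition TT :: "nat list \<Rightarrow> int set" where
  "TT xs = {fv xs j | j. j \<ge> 1}"

definition cnt :: "int set \<Rightarrow> int \<Rightarrow> nat" where
  "cnt T v = card {z \<in> T. v < z}"

lemma part_mono:
  assumes "is_partition xs" "1 \<le> i" "i \<le> j"
  shows "part xs j \<le> part xs i"
proof (cases "j \<le> length xs")
  case True
  then show ?thesis using assms sorted_rev_nth_mono[of xs "i-1" "j-1"]
    by (auto simp: is_partition_def part_def)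
next
  case False
  then show ?thesis by (simp add: part_def)
qed

lemma part_pos:
  assumes "is_partition xs" "1 \<le> j" "j \<le> length xs"
  shows "0 < part xs j"
proof -
  have "xs ! (j-1) \<in> set xs" using assms by auto
  then have "xs ! (j-1) \<noteq> 0" using assms(1) unfolding is_partition_def by metis
  then show ?thesis using assms by (simp add: part_def)
qed

lemma part_zero: "length xs < j \<Longrightarrow> part xs j = 0"
  by (simp add: part_def)

lemma part_0[simp]: "part xs 0 = 0"
  by (simp add: part_def)

lemma fv_strict:
  assumes "is_partition xs" "1 \<le> i" "i < j"
  shows "fv xs j < fv xs i"
  using part_mono[OF assms(1,2), of j] assms by (simp add: fv_def)

lemma fv_inj:
  assumes "is_partition xs" "1 \<le> i" "1 \<le> j" "fv xs i = fv xs j"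
  shows "i = j"
  using fv_strict[OF assms(1)] assms by (metis linorder_neqE_nat less_irrefl)

lemma fv_le_iff:
  assumes "is_partition xs" "1 \<le> i" "1 \<le> j"
  shows "fv xs j \<le> fv xs i \<longleftrightarrow> i \<le> j"
  using fv_strict[OF assms(1)] assms
  by (metis le_less not_le)

lemma fv_less_iff:
  assumes "is_partition xs" "1 \<le> i" "1 \<le> j"
  shows "fv xs j < fv xs i \<longleftrightarrow> i < j"
  using fv_strict[OF assms(1)] assms
  by (metis fv_inj less_asym' linorder_neqE_nat)

lemma TT_mem: "z \<in> TT xs \<longleftrightarrow> (\<exists>j\<ge>1. z = fv xs j)"
  by (auto simp: TT_def)

lemma fv_big: "length xs < j \<Longrightarrow> fv xs j = - int j"
  by (simp add: fv_def part_zero)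

lemma strict_dec_eq:
  fixes f g :: "nat \<Rightarrow> int"
  assumes sf: "\<And>i j. 1 \<le> i \<Longrightarrow> i < j \<Longrightarrow> f j < f i"
    and sg: "\<And>i j. 1 \<le> i \<Longrightarrow> i < j \<Longrightarrow> g j < g i"
    and eq: "{f j | j. j \<ge> 1} = {g j | j. j \<ge> 1}"
  shows "\<forall>j\<ge>1. f j = g j"
proof -
  have "\<forall>j. 1 \<le> j \<longrightarrow> j < n \<longrightarrow> f j = g j" for n
  proof (induction n)
    case 0 then show ?case by simp
  next
    case (Suc n)
    show ?case
    proof (intro allI impI)
      fix j assume j: "1 \<le> j" "j < Suc n"
      show "f j = g j"
      proof (cases "j < n")
        case True then show ?thesis using Suc j by auto
      next
        case False
        then have jn: "j = n" using j by auto
        have "f j \<in> {g j | j. j \<ge> 1}" using eq j by auto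
        then obtain k where k: "k \<ge> 1" "f j = g k" by auto
        have 1: "f j \<le> g j"
        proof (cases "k < j")
          case True
          then have "g k = f k" using Suc jn k by auto
          then have "f j = f k" using k by simp
          then show ?thesis using sf[of k j] True k by simp
        next
          case False
          then show ?thesis using k sg[of j k] j by (cases "j = k") auto
        qed
        have "g j \<in> {f j | j. j \<ge> 1}" using eq j by auto
        then obtain k where k: "k \<ge> 1" "g j = f k" by auto
        have 2: "g j \<le> f j"
        proof (cases "k < j")
          case True
          then have "g k = f k" using Suc jn k by auto
          then have "g j = g k" using k by simp
          then show ?thesis using sg[of k j] True k by simp
        next
          case False
          then show ?thesis using k sf[of j k] j by (cases "j = k") auto
        qed
        show ?thesis using 1 2 by simp
      qed
    qed
  qed
  then show ?thesis by (meson lessI)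
qed

lemma TT_eq_part:
  assumes "is_partition xs" "is_partition ys" "TT xs = TT ys" "1 \<le> j"
  shows "part xs j = part ys j"
proof -
  have "\<forall>j\<ge>1. fv xs j = fv ys j"
    by (rule strict_dec_eq) (use assms fv_strict in \<open>auto simp: TT_def\<close>)
  then show ?thesis using assms(4) by (simp add: fv_def)
qed

lemma young_iff: "(x, y) \<in> young xs \<longleftrightarrow> 1 \<le> x \<and> 1 \<le> y \<and> y \<le> part xs x"
  by (simp add: young_def)

lemma young_eq_part:
  "(\<forall>j\<ge>1. part xs j = part ys j) \<Longrightarrow> young xs = young ys"
  by (auto simp: young_def)

lemma young_eq_imp:
  assumes "young xs = young ys" "1 \<le> j" shows "part xs j = part ys j"
proof -
  have "\<forall>y\<ge>1. y \<le> part xs j \<longleftrightarrow> y \<le> part ys j"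
    using assms by (metis young_iff)
  then show ?thesis by (metis One_nat_def le_antisym not_less_eq_eq le0 order_refl)
qed

lemma young_sub_iff:
  "young xs \<subseteq> young ys \<longleftrightarrow> (\<forall>j\<ge>1. part xs j \<le> part ys j)"
proof
  assume h: "young xs \<subseteq> young ys"
  show "\<forall>j\<ge>1. part xs j \<le> part ys j"
  proof (intro allI impI)
    fix j :: nat assume j: "1 \<le> j"
    show "part xs j \<le> part ys j"
    proof (cases "part xs j = 0")
      case False
      then have "(j, part xs j) \<in> young xs" using j by (auto simp: young_iff)
      then have "(j, part xs j) \<in> young ys" using h by blast
      then show ?thesis by (simp add: young_iff)
    qed simp
  qed
qed (auto simp: young_def)



definition RF :: "nat list \<Rightarrow> nat list \<Rightarrow> nat \<Rightarrow> nat \<Rightarrow> bool" where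
 "RF sg lam r q \<longleftrightarrow> 1 \<le> r \<and> r \<le> q \<and>
    (\<forall>i. 1 \<le> i \<and> (i < r \<or> q < i) \<longrightarrow> part sg i = part lam i) \<and>
    (\<forall>i. r \<le> i \<and> i < q \<longrightarrow> part sg i + 1 = part lam (i+1)) \<and>
    part sg q < part lam q \<and> part lam (q+1) \<le> part sg q"

lemma G_mem: "(x, y) \<in> young lam - young sg \<longleftrightarrow> 1 \<le> x \<and> part sg x < y \<and> y \<le> part lam x"
  by (auto simp: young_def)

lemma crossing:
  assumes "(cell_adj G)\<^sup>*\<^sup>* c d"
  shows "fst c \<le> i \<Longrightarrow> i < fst d \<Longrightarrow> \<exists>y. (i, y) \<in> G \<and> (i+1, y) \<in> G"
  using assms
proof (induction rule: rtranclp_induct)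
  case base then show ?case by simp
next
  case (step e d)
  show ?case
  proof (cases "fst e \<le> i")
    case True
    with step(2,5) have "fst e = i" "fst d = i + 1" "snd d = snd e" "e \<in> G" "d \<in> G"
      unfolding cell_adj_def by auto
    then show ?thesis by (metis prod.collapse)
  next
    case False then show ?thesis using step by simp
  qed
qed

lemma strip_RF:
  assumes pl: "is_partition lam" and ps: "is_partition sg"
    and sub: "young sg \<subseteq> young lam"
    and ne: "young lam - young sg \<noteq> {}"
    and con: "edge_connected (young lam - young sg)"
    and n22: "no_2x2 (young lam - young sg)"
  shows "\<exists>r q. RF sg lam r q"
proof -
  let ?G = "young lam - young sg"
  have le: "\<And>i. 1 \<le> i \<Longrightarrow> part sg i \<le> part lam i" using sub young_sub_iff by blast
  have A: "part lam (i+1) \<le> part sg i + 1" if i: "1 \<le> i" for i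
  proof (rule ccontr)
    assume "\<not> ?thesis"
    then have h: "part sg i + 2 \<le> part lam (i+1)" by simp
    have m1: "part sg (i+1) \<le> part sg i" using part_mono[OF ps i] by simp
    have m2: "part lam (i+1) \<le> part lam i" using part_mono[OF pl i] by simp
    let ?y = "part sg i + 1"
    have "(i, ?y) \<in> ?G" "(i+1, ?y) \<in> ?G" "(i, ?y+1) \<in> ?G" "(i+1, ?y+1) \<in> ?G"
      using h m1 m2 i by (auto simp: G_mem young_iff)
    then show False using n22 unfolding no_2x2_def by blast
  qed
  define R where "R = {i. 1 \<le> i \<and> part sg i < part lam i}"
  have R_G: "i \<in> R \<longleftrightarrow> (i, part lam i) \<in> ?G" for i
    by (auto simp: R_def G_mem young_iff)
  have finR: "finite R"
  proof (rule finite_subset)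
    show "R \<subseteq> {1..length lam}"
    proof
      fix i assume "i \<in> R"
      then have "1 \<le> i" "part sg i < part lam i" by (auto simp: R_def)
      then show "i \<in> {1..length lam}" using part_zero[of lam i] by (cases "length lam < i") auto
    qed
  qed simp
  have neR: "R \<noteq> {}"
  proof -
    obtain x y where "(x, y) \<in> ?G" using ne by auto
    then have "x \<in> R" unfolding G_mem R_def by auto
    then show ?thesis by auto
  qed
  define r where "r = Min R"
  define q where "q = Max R"
  have rR: "r \<in> R" and qR: "q \<in> R" using finR neR by (auto simp: r_def q_def)
  have rq: "r \<le> q" using finR neR by (simp add: r_def q_def)
  have out: "part sg i = part lam i" if "1 \<le> i" "i \<notin> R" for i
    using that le[of i] by (auto simp: R_def)
  have RF1: "part sg i = part lam i" if "1 \<le> i" "i < r \<or> q < i" for i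
  proof -
    have "i \<notin> R" using that finR neR r_def q_def
      by (metis Max_ge Min_le not_le)
    then show ?thesis using out that by simp
  qed
  have RF2: "part sg i + 1 = part lam (i+1)" if ri: "r \<le> i" "i < q" for i
  proof -
    have i1: "1 \<le> i" using rR that by (auto simp: R_def)
    have "(cell_adj ?G)\<^sup>*\<^sup>* (r, part lam r) (q, part lam q)"
      using con rR qR R_G unfolding edge_connected_def by blast
    then obtain y where "(i, y) \<in> ?G" "(i+1, y) \<in> ?G"
      using crossing[of ?G "(r, part lam r)" "(q, part lam q)" i] ri by auto
    then have "part sg i < part lam (i+1)" by (auto simp: G_mem young_iff)
    then show ?thesis using A[OF i1] by simp
  qed
  have r1: "1 \<le> r" using rR by (simp add: R_def)
  have q1: "part sg q < part lam q" using qR by (simp add: R_def)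
  have q2: "part lam (q+1) \<le> part sg q"
  proof -
    have "part lam (q+1) = part sg (q+1)" using RF1[of "q+1"] by simp
    also have "\<dots> \<le> part sg q" using part_mono[OF ps, of q "q+1"] r1 rq by simp
    finally show ?thesis .
  qed
  show ?thesis unfolding RF_def using r1 rq RF1 RF2 q1 q2 by blast
qed

lemma cell_adj_sym: "cell_adj G c d \<Longrightarrow> cell_adj G d c"
  unfolding cell_adj_def by auto

lemma rtc_sym: "(cell_adj G)\<^sup>*\<^sup>* c d \<Longrightarrow> (cell_adj G)\<^sup>*\<^sup>* d c"
proof (induction rule: rtranclp_induct)
  case base then show ?case by simp
next
  case (step e d)
  then show ?case by (meson cell_adj_sym converse_rtranclp_into_rtranclp)
qed

lemma row_conn:
  assumes "\<And>y. y1 \<le> y \<Longrightarrow> y \<le> y1 + k \<Longrightarrow> (i, y) \<in> G"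
  shows "(cell_adj G)\<^sup>*\<^sup>* (i, y1) (i, y1 + k)"
  using assms
proof (induction k)
  case 0 then show ?case by simp
next
  case (Suc k)
  then have "(cell_adj G)\<^sup>*\<^sup>* (i, y1) (i, y1 + k)" by simp
  moreover have "cell_adj G (i, y1 + k) (i, y1 + Suc k)"
    using Suc.prems unfolding cell_adj_def by auto
  ultimately show ?case by simp
qed

lemma row_conn2:
  assumes "\<And>y. min y1 y2 \<le> y \<Longrightarrow> y \<le> max y1 y2 \<Longrightarrow> (i, y) \<in> G"
  shows "(cell_adj G)\<^sup>*\<^sup>* (i, y1) (i, y2)"
proof (cases "y1 \<le> y2")
  case True
  then show ?thesis using row_conn[of y1 "y2 - y1" i G] assms by auto
next
  case False
  then have "(cell_adj G)\<^sup>*\<^sup>* (i, y2) (i, y1)"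
    using row_conn[of y2 "y1 - y2" i G] assms by auto
  then show ?thesis by (rule rtc_sym)
qed

lemma RF_G_rows:
  assumes "RF sg lam r q" "(x, y) \<in> young lam - young sg"
  shows "r \<le> x \<and> x \<le> q"
  using assms unfolding RF_def G_mem by (metis less_irrefl not_le)

lemma RF_strip:
  assumes pl: "is_partition lam" and ps: "is_partition sg" and rf: "RF sg lam r q"
  shows "young sg \<subseteq> young lam" "young lam - young sg \<noteq> {}"
    "edge_connected (young lam - young sg)" "no_2x2 (young lam - young sg)"
    "fst ` (young lam - young sg) = {r..q}"
proof -
  let ?G = "young lam - young sg"
  have r1: "1 \<le> r" and rq: "r \<le> q"
    and o: "\<And>i. 1 \<le> i \<Longrightarrow> i < r \<or> q < i \<Longrightarrow> part sg i = part lam i"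
    and m: "\<And>i. r \<le> i \<Longrightarrow> i < q \<Longrightarrow> part sg i + 1 = part lam (i+1)"
    and q1: "part sg q < part lam q" and q2: "part lam (q+1) \<le> part sg q"
    using rf unfolding RF_def by auto
  have rowne: "part sg i < part lam i" if "r \<le> i" "i \<le> q" for i
  proof (cases "i = q")
    case False
    then have "part sg i + 1 = part lam (i+1)" using m that by simp
    moreover have "part lam (i+1) \<le> part lam i" using part_mono[OF pl, of i "i+1"] r1 that by simp
    ultimately show ?thesis by simp
  qed (use q1 in simp)
  show "young sg \<subseteq> young lam"
    unfolding young_sub_iff
  proof (intro allI impI)
    fix i :: nat assume "1 \<le> i"
    then show "part sg i \<le> part lam i" using o rowne by (metis less_or_eq_imp_le not_le)
  qed
  have c0: "(q, part lam q) \<in> ?G" using q1 r1 rq by (simp add: G_mem young_iff)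
  then show "young lam - young sg \<noteq> {}" by auto
  show "no_2x2 ?G"
    unfolding no_2x2_def
  proof
    assume "\<exists>x y. (x, y) \<in> ?G \<and> (x + 1, y) \<in> ?G \<and> (x, y + 1) \<in> ?G \<and> (x + 1, y + 1) \<in> ?G"
    then obtain x y where c: "(x, y) \<in> ?G" "(x + 1, y) \<in> ?G" "(x + 1, y + 1) \<in> ?G" by blast
    have "r \<le> x" "x + 1 \<le> q" using RF_G_rows[OF rf c(1)] RF_G_rows[OF rf c(2)] by auto
    then have "part sg x + 1 = part lam (x+1)" using m by simp
    then show False using c(1,3) by (auto simp: G_mem young_iff)
  qed
  have toc0: "(cell_adj ?G)\<^sup>*\<^sup>* (i, y) (q, part lam q)"
    if "q - i = n" "(i, y) \<in> ?G" for n i y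
    using that
  proof (induction n arbitrary: i y)
    case 0
    then have iq: "i = q" using RF_G_rows[OF rf] by fastforce
    have "(cell_adj ?G)\<^sup>*\<^sup>* (q, y) (q, part lam q)"
      by (rule row_conn2) (use 0(2) iq in \<open>auto simp: G_mem young_iff\<close>)
    then show ?case using iq by simp
  next
    case (Suc n)
    have ri: "r \<le> i" "i < q" using RF_G_rows[OF rf Suc(3)] Suc(2) by auto
    have e: "part sg i + 1 = part lam (i+1)" using m ri by simp
    have i1: "1 \<le> i" using ri r1 by simp
    have c1: "(i, part lam (i+1)) \<in> ?G" using e i1 part_mono[OF pl i1, of "i+1"] by (simp add: G_mem young_iff)
    have c2: "(i+1, part lam (i+1)) \<in> ?G" using rowne[of "i+1"] ri by (simp add: G_mem young_iff)
    have "(cell_adj ?G)\<^sup>*\<^sup>* (i, y) (i, part lam (i+1))"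
      using Suc(3) c1 by (intro row_conn2) (auto simp: G_mem young_iff)
    moreover have "cell_adj ?G (i, part lam (i+1)) (i+1, part lam (i+1))"
      using c1 c2 unfolding cell_adj_def by simp
    moreover have "(cell_adj ?G)\<^sup>*\<^sup>* (i+1, part lam (i+1)) (q, part lam q)"
      using Suc.IH[of "i+1"] Suc(2) c2 by simp
    ultimately show ?case by (meson converse_rtranclp_into_rtranclp rtranclp_trans)
  qed
  show "edge_connected ?G"
    unfolding edge_connected_def
  proof (intro ballI)
    fix c d assume "c \<in> ?G" "d \<in> ?G"
    then have "(cell_adj ?G)\<^sup>*\<^sup>* c (q, part lam q)" "(cell_adj ?G)\<^sup>*\<^sup>* d (q, part lam q)"
      using toc0 by (metis prod.collapse)+
    then show "(cell_adj ?G)\<^sup>*\<^sup>* c d" by (meson rtc_sym rtranclp_trans)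
  qed
  show "fst ` ?G = {r..q}"
  proof
    show "fst ` ?G \<subseteq> {r..q}" using RF_G_rows[OF rf] by force
    show "{r..q} \<subseteq> fst ` ?G"
    proof
      fix i assume "i \<in> {r..q}"
      then have "part sg i < part lam i" "1 \<le> i" using rowne r1 by auto
      then have "(i, part lam i) \<in> ?G" by (simp add: G_mem young_iff)
      then show "i \<in> fst ` ?G" by force
    qed
  qed
qed



lemma TT_bound: "is_partition xs \<Longrightarrow> z \<in> TT xs \<Longrightarrow> z \<le> fv xs 1"
  unfolding TT_mem using fv_le_iff by fastforce

lemma fin_above: "is_partition xs \<Longrightarrow> finite {z \<in> TT xs. v < z}"
proof -
  assume p: "is_partition xs"
  have "{z \<in> TT xs. v < z} \<subseteq> {v<..fv xs 1}" using TT_bound[OF p] by auto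
  then show ?thesis by (rule finite_subset) simp
qed

lemma RF_T:
  assumes pl: "is_partition lam" and ps: "is_partition sg" and rf: "RF sg lam r q"
  shows "TT sg = TT lam - {fv lam r} \<union> {fv sg q}" "fv sg q \<notin> TT lam"
    "fv sg q < fv lam r" "fv lam (q+1) < fv sg q" "fv sg q < fv lam q"
proof -
  have r1: "1 \<le> r" and rq: "r \<le> q"
    and o: "\<And>i. 1 \<le> i \<Longrightarrow> i < r \<or> q < i \<Longrightarrow> part sg i = part lam i"
    and m: "\<And>i. r \<le> i \<Longrightarrow> i < q \<Longrightarrow> part sg i + 1 = part lam (i+1)"
    and q1: "part sg q < part lam q" and q2: "part lam (q+1) \<le> part sg q"
    using rf unfolding RF_def by auto
  have fo: "fv sg i = fv lam i" if "1 \<le> i" "i < r \<or> q < i" for i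
    using o[OF that] by (simp add: fv_def)
  have fm: "fv sg i = fv lam (i+1)" if "r \<le> i" "i < q" for i
    using m[OF that] by (simp add: fv_def)
  show g1: "fv lam (q+1) < fv sg q" "fv sg q < fv lam q"
    using q1 q2 by (auto simp: fv_def)
  show "fv sg q \<notin> TT lam"
  proof
    assume "fv sg q \<in> TT lam"
    then obtain j where j: "j \<ge> 1" "fv sg q = fv lam j" by (auto simp: TT_mem)
    show False
    proof (cases "j \<le> q")
      case True
      then have "fv lam q \<le> fv lam j" using fv_le_iff[OF pl j(1), of q] r1 rq by simp
      then show False using g1 j by simp
    next
      case False
      then have "fv lam j \<le> fv lam (q+1)" using fv_le_iff[OF pl _ j(1), of "q+1"] by simp
      then show False using g1 j by simp
    qed
  qed
  show "fv sg q < fv lam r"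
    using g1 fv_le_iff[OF pl r1, of q] r1 rq by simp
  show "TT sg = TT lam - {fv lam r} \<union> {fv sg q}"
  proof
    show "TT sg \<subseteq> TT lam - {fv lam r} \<union> {fv sg q}"
    proof
      fix z assume "z \<in> TT sg"
      then obtain j where j: "j \<ge> 1" "z = fv sg j" by (auto simp: TT_mem)
      show "z \<in> TT lam - {fv lam r} \<union> {fv sg q}"
      proof (cases "j < r \<or> q < j")
        case True
        then have "z = fv lam j" "j \<noteq> r" using fo j rq by auto
        then show ?thesis using j fv_inj[OF pl r1 j(1)] by (auto simp: TT_mem)
      next
        case False
        show ?thesis
        proof (cases "j = q")
          case False
          then have "z = fv lam (j+1)" "j + 1 \<noteq> r" using fm j \<open>\<not> (j < r \<or> q < j)\<close> by auto
          then show ?thesis using j fv_inj[OF pl r1, of "j+1"] by (auto simp: TT_mem)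
        qed (use j in simp)
      qed
    qed
    show "TT lam - {fv lam r} \<union> {fv sg q} \<subseteq> TT sg"
    proof
      fix z assume z: "z \<in> TT lam - {fv lam r} \<union> {fv sg q}"
      show "z \<in> TT sg"
      proof (cases "z = fv sg q")
        case True then show ?thesis unfolding TT_mem using r1 rq by (intro exI[of _ q]) auto
      next
        case False
        then obtain j where j: "j \<ge> 1" "z = fv lam j" "j \<noteq> r" using z by (auto simp: TT_mem)
        show ?thesis
        proof (cases "j < r \<or> q < j")
          case True then show ?thesis using fo j by (auto simp: TT_mem)
        next
          case False
          then have "r \<le> j - 1" "j - 1 < q" "j - 1 + 1 = j" using j by auto
          then have "z = fv sg (j-1)" using fm[of "j-1"] j by simp
          then show ?thesis unfolding TT_mem using \<open>r \<le> j - 1\<close> r1 by (intro exI[of _ "j-1"]) auto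
        qed
      qed
    qed
  qed
qed

lemma RF_card:
  assumes pl: "is_partition lam" and ps: "is_partition sg" and rf: "RF sg lam r q"
  shows "int (card (young lam - young sg)) = fv lam r - fv sg q"
proof -
  have r1: "1 \<le> r" and rq: "r \<le> q"
    and m: "\<And>i. r \<le> i \<Longrightarrow> i < q \<Longrightarrow> part sg i + 1 = part lam (i+1)"
    using rf unfolding RF_def by auto
  have sub: "young sg \<subseteq> young lam" using RF_strip[OF pl ps rf] by simp
  have le: "part sg i \<le> part lam i" if "1 \<le> i" for i using sub young_sub_iff that by blast
  have G: "young lam - young sg = Sigma {r..q} (\<lambda>i. {part sg i<..part lam i})"
  proof
    show "young lam - young sg \<subseteq> Sigma {r..q} (\<lambda>i. {part sg i<..part lam i})"
    proof
      fix c assume c: "c \<in> young lam - young sg"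
      obtain x y where xy: "c = (x, y)" by (cases c)
      have "r \<le> x \<and> x \<le> q" using RF_G_rows[OF rf] c xy by blast
      moreover have "part sg x < y \<and> y \<le> part lam x" using c xy G_mem by blast
      ultimately show "c \<in> Sigma {r..q} (\<lambda>i. {part sg i<..part lam i})" using xy by simp
    qed
    show "Sigma {r..q} (\<lambda>i. {part sg i<..part lam i}) \<subseteq> young lam - young sg"
    proof
      fix c assume c: "c \<in> Sigma {r..q} (\<lambda>i. {part sg i<..part lam i})"
      obtain x y where xy: "c = (x, y)" by (cases c)
      have "1 \<le> x" "part sg x < y" "y \<le> part lam x" using c xy r1 by auto
      then show "c \<in> young lam - young sg" using xy G_mem by blast
    qed
  qed
  have "card (young lam - young sg) = (\<Sum>i\<in>{r..q}. part lam i - part sg i)"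
    unfolding G by simp
  then have "int (card (young lam - young sg)) = (\<Sum>i\<in>{r..q}. int (part lam i) - int (part sg i))"
    using le r1 by (simp add: of_nat_diff)
  also have "\<dots> = (\<Sum>i\<in>{r..<q}. int (part lam i) - int (part sg i)) + (int (part lam q) - int (part sg q))"
    using rq by (simp add: atLeastLessThanSuc_atLeastAtMost[symmetric] sum.atLeastLessThan_Suc)
  also have "(\<Sum>i\<in>{r..<q}. int (part lam i) - int (part sg i))
      = (\<Sum>i\<in>{r..<q}. (- int (part lam (Suc i)) + int (Suc i)) - (- int (part lam i) + int i))"
  proof (rule sum.cong)
    fix i assume "i \<in> {r..<q}"
    then have "part sg i + 1 = part lam (i+1)" using m by simp
    then show "int (part lam i) - int (part sg i) = (- int (part lam (Suc i)) + int (Suc i)) - (- int (part lam i) + int i)"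
      by simp
  qed simp
  also have "\<dots> = (- int (part lam q) + int q) - (- int (part lam r) + int r)"
    by (rule sum_Suc_diff'[OF rq])
  finally show ?thesis by (simp add: fv_def)
qed

lemma RF_ht:
  assumes pl: "is_partition lam" and ps: "is_partition sg" and rf: "RF sg lam r q"
  shows "ht (young lam - young sg) = int q - int r"
proof -
  have "r \<le> q" using rf by (simp add: RF_def)
  then show ?thesis using RF_strip(5)[OF pl ps rf] by (simp add: ht_def)
qed

lemma cnt_eq:
  assumes p: "is_partition xs" and h: "\<And>j. 1 \<le> j \<Longrightarrow> (v < fv xs j \<longleftrightarrow> j \<le> q)"
  shows "cnt (TT xs) v = q"
proof -
  have "{z \<in> TT xs. v < z} = fv xs ` {1..q}"
    using h by (auto simp: TT_mem)
  moreover have "inj_on (fv xs) {1..q}"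
    using fv_inj[OF p] by (auto simp: inj_on_def)
  ultimately show ?thesis by (simp add: cnt_def card_image)
qed

lemma cnt_idx:
  assumes p: "is_partition xs" and a: "1 \<le> a"
  shows "cnt (TT xs) (fv xs a) = a - 1"
  by (rule cnt_eq[OF p]) (use fv_less_iff[OF p _ a] in auto)

lemma cnt_gap:
  assumes p: "is_partition xs" and q: "1 \<le> q" and v: "fv xs (q+1) < v" "v < fv xs q"
  shows "cnt (TT xs) v = q"
proof (rule cnt_eq[OF p])
  fix j :: nat assume j: "1 \<le> j"
  show "v < fv xs j \<longleftrightarrow> j \<le> q"
  proof
    assume h: "v < fv xs j"
    show "j \<le> q"
    proof (rule ccontr)
      assume "\<not> j \<le> q"
      then have "q+1 \<le> j" by simp
      then have "fv xs j \<le> fv xs (q+1)" using fv_le_iff[OF p _ j, of "q+1"] by simp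
      then show False using v h by simp
    qed
  next
    assume "j \<le> q"
    then show "v < fv xs j" using fv_le_iff[OF p j q] v by simp
  qed
qed

lemma cnt_move:
  assumes fin: "finite {z \<in> T. v < z}" and x: "x \<in> T" and y: "y \<notin> T"
  shows "int (cnt (T - {x} \<union> {y}) v) = int (cnt T v) - of_bool (v < x) + of_bool (v < y)"
proof -
  let ?A = "{z \<in> T. v < z}"
  have e: "{z \<in> T - {x} \<union> {y}. v < z} = (?A - {x}) \<union> (if v < y then {y} else {})"
    by auto
  have c1: "card (?A - {x}) = card ?A - of_bool (v < x)"
    using fin x by (auto simp: card_Diff_singleton)
  have c0: "card ?A \<ge> 1" if vx: "v < x"
  proof -
    have "x \<in> ?A" using x vx by simp
    then have "card ?A > 0" using fin card_gt_0_iff by blast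
    then show ?thesis by simp
  qed
  show ?thesis
    unfolding cnt_def e using fin y c1 c0 by (cases "v < x"; cases "v < y") (auto simp: of_nat_diff)
qed



lemma mk_list:
  fixes s :: "nat \<Rightarrow> nat"
  assumes mono: "\<And>i. 1 \<le> i \<Longrightarrow> s (i+1) \<le> s i" and zero: "\<And>j. N < j \<Longrightarrow> s j = 0"
  shows "\<exists>sg. is_partition sg \<and> (\<forall>j\<ge>1. part sg j = s j)"
proof -
  have anti: "s j \<le> s i" if "1 \<le> i" "i \<le> j" for i j
    using that(2)
  proof (induction j rule: dec_induct)
    case (step n)
    then show ?case using mono[of n] that(1) by simp
  qed simp
  define M where "M = (LEAST k. s (k+1) = 0)"
  have sM: "s (M+1) = 0" unfolding M_def by (rule LeastI[of _ N]) (use zero in simp)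
  have pos: "0 < s j" if "1 \<le> j" "j \<le> M" for j
  proof (rule ccontr)
    assume "\<not> 0 < s j"
    then have "s ((j-1)+1) = 0" using that by simp
    then have "M \<le> j - 1" unfolding M_def by (rule Least_le)
    then show False using that by simp
  qed
  have z: "s j = 0" if "M < j" for j
    using anti[of "M+1" j] sM that by simp
  define sg where "sg = map s [1..<M+1]"
  have len: "length sg = M" by (simp add: sg_def)
  have nth: "sg ! i = s (i+1)" if "i < M" for i
    using that by (simp add: sg_def nth_map_upt del: upt_Suc)
  have part: "part sg j = s j" if "1 \<le> j" for j
    using that nth[of "j-1"] z[of j] by (auto simp: part_def len)
  have "is_partition sg"
    unfolding is_partition_def
  proof
    show "sorted (rev sg)"
      unfolding sorted_rev_iff_nth_mono
      using nth anti len by simp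
    show "0 \<notin> set sg"
      using pos by (auto simp: sg_def simp del: upt_Suc) (metis less_Suc_eq_le less_irrefl)
  qed
  then show ?thesis using part by blast
qed

lemma move_RF:
  assumes pl: "is_partition lam" and x: "x \<in> TT lam" and y: "y \<notin> TT lam" and yx: "y < x"
  shows "\<exists>sg r q. is_partition sg \<and> RF sg lam r q \<and> fv lam r = x \<and> fv sg q = y"
proof -
  obtain r where r: "1 \<le> r" "fv lam r = x" using x by (auto simp: TT_mem)
  define Q where "Q = {j. 1 \<le> j \<and> y < fv lam j}"
  have rQ: "r \<in> Q" using r yx by (simp add: Q_def)
  have finQ: "finite Q"
  proof (rule finite_subset)
    show "Q \<subseteq> {..length lam + nat (- y)}"
    proof
      fix j assume "j \<in> Q"
      then have j: "1 \<le> j" "y < fv lam j" by (auto simp: Q_def)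
      show "j \<in> {..length lam + nat (- y)}"
      proof (cases "length lam < j")
        case True
        then have "fv lam j = - int j" by (rule fv_big)
        then show ?thesis using j by simp
      qed simp
    qed
  qed simp
  define q where "q = Max Q"
  have qQ: "q \<in> Q" using finQ rQ unfolding q_def by (metis Max_in empty_iff)
  have rq: "r \<le> q" using finQ rQ by (simp add: q_def)
  have q1: "1 \<le> q" and yq: "y < fv lam q" using qQ by (auto simp: Q_def)
  have "q + 1 \<notin> Q" using finQ q_def by (metis Max_ge Suc_eq_plus1 not_less_eq_eq order_refl)
  then have "fv lam (q+1) \<le> y" by (simp add: Q_def)
  moreover have "fv lam (q+1) \<noteq> y" using y by (auto simp: TT_mem)
  ultimately have yq1: "fv lam (q+1) < y" by simp
  have yqnn: "0 \<le> y + int q" using yq1 by (simp add: fv_def)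
  define s where "s i = (if i < r \<or> q < i then part lam i else if i < q then part lam (i+1) - 1 else nat (y + int q))" for i
  have lq: "1 \<le> part lam q" using yq yqnn by (simp add: fv_def)
  have lmono: "\<And>i j. 1 \<le> i \<Longrightarrow> i \<le> j \<Longrightarrow> part lam j \<le> part lam i" using part_mono[OF pl] by blast
  have smono: "s (i+1) \<le> s i" if i: "1 \<le> i" for i
  proof -
    have a1: "part lam (i+1) \<le> part lam i" using lmono i by simp
    have a2: "part lam (i+2) \<le> part lam (i+1)" using lmono[of "i+1" "i+2"] by simp
    have a3: "int (part lam (q+1)) \<le> y + int q" using yq1 by (simp add: fv_def)
    have a4: "y + int q < int (part lam q)" using yq by (simp add: fv_def)
    have a5: "i + 1 \<le> q \<Longrightarrow> part lam q \<le> part lam (i+1)" using lmono[of "i+1" q] by simp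
    have a6: "r \<le> q \<Longrightarrow> part lam q \<le> part lam r" using lmono[of r q] r by simp
    show ?thesis
      unfolding s_def using a1 a2 a3 a4 a5 a6 rq yqnn lq
      by (auto simp: nat_le_iff le_nat_iff)
  qed
  have szero: "s j = 0" if "length lam + q < j" for j
    using that part_zero[of lam j] by (simp add: s_def)
  obtain sg where sg: "is_partition sg" "\<forall>j\<ge>1. part sg j = s j"
    using mk_list[of s, OF smono szero] by blast
  have "RF sg lam r q"
    unfolding RF_def
  proof (intro conjI allI impI)
    show "1 \<le> r" "r \<le> q" using r rq by auto
  next
    fix i assume "1 \<le> i \<and> (i < r \<or> q < i)"
    then show "part sg i = part lam i" using sg by (simp add: s_def)
  next
    fix i assume i: "r \<le> i \<and> i < q"
    have "part lam q \<le> part lam (i+1)" using lmono[of "i+1" q] i by simp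
    then show "part sg i + 1 = part lam (i+1)" using sg i r lq by (simp add: s_def)
  next
    show "part sg q < part lam q" using sg q1 yq yqnn rq by (simp add: s_def fv_def nat_less_iff)
  next
    show "part lam (q+1) \<le> part sg q" using sg q1 yq1 yqnn rq by (simp add: s_def fv_def le_nat_iff)
  qed
  moreover have "fv sg q = y" using sg q1 yqnn rq by (simp add: s_def fv_def)
  ultimately show ?thesis using sg r by blast
qed



lemma strip_move:
  assumes pl: "is_partition lam" and bs: "border_strip lam g"
  shows "\<exists>sg x y. is_partition sg \<and> young sg \<subseteq> young lam \<and> g = young lam - young sg \<and>
     x \<in> TT lam \<and> y \<notin> TT lam \<and> y < x \<and> TT sg = TT lam - {x} \<union> {y}"
proof -
  obtain sg where sg: "is_partition sg" "young sg \<subseteq> young lam" "g = young lam - young sg"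
    and h: "g \<noteq> {}" "edge_connected g" "no_2x2 g"
    using bs unfolding border_strip_def by blast
  obtain r q where rf: "RF sg lam r q" using strip_RF[OF pl sg(1,2)] h sg(3) by blast
  have r1: "1 \<le> r" using rf by (simp add: RF_def)
  have "fv lam r \<in> TT lam" using r1 by (auto simp: TT_mem)
  then show ?thesis using RF_T[OF pl sg(1) rf] sg by blast
qed

lemma move_strip:
  assumes pl: "is_partition lam" and ps: "is_partition sg"
    and x: "x \<in> TT lam" and y: "y \<notin> TT lam" and yx: "y < x"
    and T: "TT sg = TT lam - {x} \<union> {y}"
  shows "border_strip lam (young lam - young sg)" "young sg \<subseteq> young lam"
    "int (card (young lam - young sg)) = x - y"
    "ht (young lam - young sg) = int (cnt (TT lam) y) - int (cnt (TT lam) x) - 1"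
proof -
  obtain sg' r q where sg': "is_partition sg'" "RF sg' lam r q" "fv lam r = x" "fv sg' q = y"
    using move_RF[OF pl x y yx] by blast
  have r1: "1 \<le> r" and rq: "r \<le> q" using sg'(2) by (auto simp: RF_def)
  have T': "TT sg' = TT sg" using RF_T(1)[OF pl sg'(1,2)] sg' T by simp
  have Y: "young sg = young sg'"
    using TT_eq_part[OF sg'(1) ps T'] by (intro young_eq_part) auto
  note st = RF_strip[OF pl sg'(1,2)]
  show "border_strip lam (young lam - young sg)"
    unfolding border_strip_def Y using st sg'(1) by blast
  show "young sg \<subseteq> young lam" using st Y by simp
  show "int (card (young lam - young sg)) = x - y"
    using RF_card[OF pl sg'(1,2)] Y sg' by simp
  have cy: "cnt (TT lam) y = q"
    using cnt_gap[OF pl, of q y] RF_T[OF pl sg'(1,2)] sg' r1 rq by simp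
  have cx: "cnt (TT lam) x = r - 1" using cnt_idx[OF pl r1] sg' by simp
  show "ht (young lam - young sg) = int (cnt (TT lam) y) - int (cnt (TT lam) x) - 1"
    using RF_ht[OF pl sg'(1,2)] Y cy cx r1 by simp
qed

lemma move_exists:
  assumes pl: "is_partition lam" and x: "x \<in> TT lam" and y: "y \<notin> TT lam" and yx: "y < x"
  shows "\<exists>sg. is_partition sg \<and> TT sg = TT lam - {x} \<union> {y}"
proof -
  obtain sg' r q where sg': "is_partition sg'" "RF sg' lam r q" "fv lam r = x" "fv sg' q = y"
    using move_RF[OF pl x y yx] by blast
  then show ?thesis using RF_T(1)[OF pl sg'(1,2)] by metis
qed

lemma psize_part:
  assumes "length xs \<le> N"
  shows "(\<Sum>j\<in>{1..N}. part xs j) = psize xs"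
proof -
  have "(\<Sum>j\<in>{1..N}. part xs j) = (\<Sum>i\<in>{0..<N}. part xs (Suc i))"
  proof -
    have "{1..N} = Suc ` {0..<N}" by (auto simp: image_iff)
    then show ?thesis unfolding \<open>{1..N} = Suc ` {0..<N}\<close> by (subst sum.reindex) (auto simp: comp_def)
  qed
  also have "\<dots> = (\<Sum>i\<in>{0..<length xs}. part xs (Suc i))"
    using assms by (intro sum.mono_neutral_right) (auto simp: part_def)
  also have "\<dots> = (\<Sum>i\<in>{0..<length xs}. xs ! i)"
    by (intro sum.cong) (auto simp: part_def)
  also have "\<dots> = psize xs" by (simp add: psize_def sum_list_sum_nth)
  finally show ?thesis .
qed

lemma TT_W:
  assumes p: "is_partition xs" and N: "length xs \<le> N"
  shows "TT xs \<inter> {- int N..} = fv xs ` {1..N}"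
proof
  show "TT xs \<inter> {- int N..} \<subseteq> fv xs ` {1..N}"
  proof
    fix z assume "z \<in> TT xs \<inter> {- int N..}"
    then obtain j where j: "1 \<le> j" "z = fv xs j" "- int N \<le> z" by (auto simp: TT_mem)
    have "j \<le> N"
    proof (rule ccontr)
      assume "\<not> j \<le> N"
      then have "fv xs j = - int j" using N by (intro fv_big) simp
      then show False using j \<open>\<not> j \<le> N\<close> by simp
    qed
    then show "z \<in> fv xs ` {1..N}" using j by auto
  qed
  show "fv xs ` {1..N} \<subseteq> TT xs \<inter> {- int N..}"
    by (auto simp: TT_mem fv_def)
qed

lemma psize_sum:
  assumes p: "is_partition xs" and N: "length xs \<le> N"
  shows "(\<Sum>z\<in>TT xs \<inter> {- int N..}. z) = int (psize xs) - (\<Sum>j\<in>{1..N}. int j)"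
proof -
  have inj: "inj_on (fv xs) {1..N}" using fv_inj[OF p] by (auto simp: inj_on_def)
  have "(\<Sum>z\<in>TT xs \<inter> {- int N..}. z) = (\<Sum>j\<in>{1..N}. fv xs j)"
    unfolding TT_W[OF p N] using inj by (simp add: sum.reindex)
  also have "\<dots> = (\<Sum>j\<in>{1..N}. int (part xs j)) - (\<Sum>j\<in>{1..N}. int j)"
    by (simp add: fv_def sum_subtractf)
  also have "(\<Sum>j\<in>{1..N}. int (part xs j)) = int (psize xs)"
    using psize_part[OF N] by (metis of_nat_sum)
  finally show ?thesis .
qed

lemma sum_rel:
  assumes pl: "is_partition lam" and pm: "is_partition mu" and sz: "psize mu = psize lam"
    and A: "TT lam - TT mu = {A1, A2}" and B: "TT mu - TT lam = {B1, B2}"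
    and A12: "A1 \<noteq> A2" and B12: "B1 \<noteq> B2"
  shows "A1 + A2 = B1 + B2"
proof -
  define N where "N = max (length lam) (length mu)"
  have Nl: "length lam \<le> N" and Nm: "length mu \<le> N" by (auto simp: N_def)
  let ?W = "{- int N..}"
  have inW: "z \<in> ?W" if th: "z \<in> TT xs" "z \<notin> TT ys" "xs = lam \<and> ys = mu \<or> xs = mu \<and> ys = lam" for z xs ys
  proof (rule ccontr)
    assume "z \<notin> ?W"
    obtain j where j: "1 \<le> j" "z = fv xs j" using th by (auto simp: TT_mem)
    have "\<not> j \<le> N"
    proof
      assume "j \<le> N"
      then have "- int N \<le> fv xs j" by (simp add: fv_def)
      then show False using \<open>z \<notin> ?W\<close> j by simp
    qed
    then have "fv xs j = - int j" "fv ys j = - int j" using Nl Nm th(3) by (auto intro!: fv_big)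
    then have "z \<in> TT ys" using j by (auto simp: TT_mem)
    then show False using th by simp
  qed
  define C where "C = TT lam \<inter> TT mu \<inter> ?W"
  have finl: "finite (TT lam \<inter> ?W)" unfolding TT_W[OF pl Nl] by simp
  have finC: "finite C" unfolding C_def using finl by (rule finite_subset[rotated]) auto
  have Al: "TT lam \<inter> ?W = C \<union> {A1, A2}"
    using A inW[of _ lam mu] unfolding C_def by blast
  have Bm: "TT mu \<inter> ?W = C \<union> {B1, B2}"
    using B inW[of _ mu lam] unfolding C_def by blast
  have ACn: "A1 \<notin> C" "A2 \<notin> C" using A unfolding C_def by auto
  have BCn: "B1 \<notin> C" "B2 \<notin> C" using B unfolding C_def by auto
  have "(\<Sum>z\<in>TT lam \<inter> ?W. z) = sum id C + A1 + A2"
    unfolding Al using finC ACn A12 by (simp add: sum.insert_if)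
  moreover have "(\<Sum>z\<in>TT mu \<inter> ?W. z) = sum id C + B1 + B2"
    unfolding Bm using finC BCn B12 by (simp add: sum.insert_if)
  moreover have "(\<Sum>z\<in>TT lam \<inter> ?W. z) = (\<Sum>z\<in>TT mu \<inter> ?W. z)"
    using psize_sum[OF pl Nl] psize_sum[OF pm Nm] sz by simp
  ultimately show ?thesis by simp
qed



lemma classify:
  fixes L M :: "int set"
  assumes e: "L - {x} \<union> {y} = M - {x'} \<union> {y'}" and "x \<in> L" "y \<notin> L" "x' \<in> M" "y' \<notin> M"
    and A: "L - M = {A1, A2}" and B: "M - L = {B1, B2}" and "A1 \<noteq> A2" "B1 \<noteq> B2"
  shows "x \<in> {A1, A2} \<and> y \<in> {B1, B2}"
proof
  show "x \<in> {A1, A2}"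
  proof (rule ccontr)
    assume nx: "x \<notin> {A1, A2}"
    then have "x \<in> M" using A assms(2) by blast
    have "x \<notin> L - {x} \<union> {y}" using assms(3) assms(2) by auto
    then have "x = x'" using e \<open>x \<in> M\<close> by blast
    have "A1 \<in> L - {x} \<union> {y}" "A2 \<in> L - {x} \<union> {y}" using A nx by auto
    then have "A1 = y'" "A2 = y'" using e A \<open>x = x'\<close> by auto
    then show False using assms(8) by simp
  qed
  show "y \<in> {B1, B2}"
  proof (rule ccontr)
    assume ny: "y \<notin> {B1, B2}"
    have "y \<in> M - {x'} \<union> {y'}" using e by blast
    then have "y \<in> M \<or> y = y'" by auto
    then have yy: "y = y'" using B ny assms(3) by blast
    have "B1 \<in> M" "B2 \<in> M" "B1 \<notin> L" "B2 \<notin> L" using B by auto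
    then have "B1 = x' \<or> B1 \<in> L - {x} \<union> {y}" "B2 = x' \<or> B2 \<in> L - {x} \<union> {y}" using e by blast+
    then have "B1 = x' \<or> B1 = y" "B2 = x' \<or> B2 = y" using \<open>B1 \<notin> L\<close> \<open>B2 \<notin> L\<close> by auto
    then show False using yy assms(5,9) \<open>B1 \<in> M\<close> \<open>B2 \<in> M\<close> by auto
  qed
qed

lemma cnt2:
  assumes fin: "finite {z \<in> T. v < z}" and x: "x1 \<in> T" "x2 \<in> T" "x1 \<noteq> x2" and y: "y1 \<notin> T" "y2 \<notin> T" "y1 \<noteq> y2"
  shows "int (cnt (T - {x1, x2} \<union> {y1, y2}) v) = int (cnt T v) - of_bool (v < x1) - of_bool (v < x2)
      + of_bool (v < y1) + of_bool (v < y2)"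
proof -
  let ?T1 = "T - {x1} \<union> {y1}"
  have e: "T - {x1, x2} \<union> {y1, y2} = ?T1 - {x2} \<union> {y2}" using x y by auto
  have fin1: "finite {z \<in> ?T1. v < z}"
    by (rule finite_subset[of _ "insert y1 {z \<in> T. v < z}"]) (use fin in auto)
  have "int (cnt (?T1 - {x2} \<union> {y2}) v) = int (cnt ?T1 v) - of_bool (v < x2) + of_bool (v < y2)"
    by (rule cnt_move[OF fin1]) (use x y in auto)
  moreover have "int (cnt ?T1 v) = int (cnt T v) - of_bool (v < x1) + of_bool (v < y1)"
    by (rule cnt_move[OF fin]) (use x y in auto)
  ultimately show ?thesis unfolding e by simp
qed

lemma TT_cong: "(\<forall>j\<ge>1. part xs j = part ys j) \<Longrightarrow> TT xs = TT ys"
  unfolding TT_def fv_def by (metis (no_types, lifting))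

lemma S_TT: "S_set xs = (\<lambda>z. real_of_int z + 1/2) ` TT xs"
proof -
  have "S_set xs = (\<lambda>j. real_of_int (fv xs j) + 1/2) ` {j. j \<ge> 1}"
    unfolding S_set_def fv_def by auto
  also have "\<dots> = (\<lambda>z. real_of_int z + 1/2) ` TT xs"
    unfolding TT_def by (auto simp: image_iff)
  finally show ?thesis .
qed



lemma pairs_eq:
  assumes pl: "is_partition lam" and pm: "is_partition mu"
    and s1: "is_partition s1" and s2: "is_partition s2"
    and b1: "border_strip lam (young lam - young s1)" "border_strip mu (young mu - young s1)"
    and b2: "border_strip lam (young lam - young s2)" "border_strip mu (young mu - young s2)"
    and y1: "young s1 \<subseteq> young lam" "young s1 \<subseteq> young mu"
    and y2: "young s2 \<subseteq> young lam" "young s2 \<subseteq> young mu"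
    and cls: "\<And>sg x y x' y'. is_partition sg \<Longrightarrow> x \<in> TT lam \<Longrightarrow> y \<notin> TT lam \<Longrightarrow> y < x \<Longrightarrow>
       TT sg = TT lam - {x} \<union> {y} \<Longrightarrow> TT sg = TT mu - {x'} \<union> {y'} \<Longrightarrow>
       x' \<in> TT mu \<Longrightarrow> y' \<notin> TT mu \<Longrightarrow> y' < x' \<Longrightarrow> TT sg = TT s1 \<or> TT sg = TT s2"
  shows "{(g, g'). border_strip lam g \<and> border_strip mu g' \<and> young lam - g = young mu - g'}
    = {(young lam - young s1, young mu - young s1), (young lam - young s2, young mu - young s2)}"
proof
  show "{(young lam - young s1, young mu - young s1), (young lam - young s2, young mu - young s2)}
    \<subseteq> {(g, g'). border_strip lam g \<and> border_strip mu g' \<and> young lam - g = young mu - g'}"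
    using b1 b2 y1 y2 by auto
  show "{(g, g'). border_strip lam g \<and> border_strip mu g' \<and> young lam - g = young mu - g'}
    \<subseteq> {(young lam - young s1, young mu - young s1), (young lam - young s2, young mu - young s2)}"
  proof
    fix p assume "p \<in> {(g, g'). border_strip lam g \<and> border_strip mu g' \<and> young lam - g = young mu - g'}"
    then obtain g g' where p: "p = (g, g')" and bg: "border_strip lam g" "border_strip mu g'"
      and eq: "young lam - g = young mu - g'" by auto
    obtain sg x y where sg: "is_partition sg" "young sg \<subseteq> young lam" "g = young lam - young sg"
      "x \<in> TT lam" "y \<notin> TT lam" "y < x" "TT sg = TT lam - {x} \<union> {y}"
      using strip_move[OF pl bg(1)] by blast
    obtain sg' x' y' where sg': "is_partition sg'" "young sg' \<subseteq> young mu" "g' = young mu - young sg'"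
      "x' \<in> TT mu" "y' \<notin> TT mu" "y' < x'" "TT sg' = TT mu - {x'} \<union> {y'}"
      using strip_move[OF pm bg(2)] by blast
    have "young sg = young sg'" using eq sg(2,3) sg'(2,3) by blast
    then have "TT sg = TT sg'" using young_eq_imp by (intro TT_cong) blast
    then have "TT sg = TT mu - {x'} \<union> {y'}" using sg'(7) by simp
    then have "TT sg = TT s1 \<or> TT sg = TT s2" using cls[OF sg(1,4,5,6,7) _ sg'(4,5,6)] by blast
    moreover have "young sg = young s1" if "TT sg = TT s1"
      using TT_eq_part[OF sg(1) s1 that] by (intro young_eq_part) auto
    moreover have "young sg = young s2" if "TT sg = TT s2"
      using TT_eq_part[OF sg(1) s2 that] by (intro young_eq_part) auto
    ultimately show "p \<in> {(young lam - young s1, young mu - young s1), (young lam - young s2, young mu - young s2)}"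
      using p sg(3) sg'(3) \<open>young sg = young sg'\<close> by auto
  qed
qed

theorem lemma7:
  fixes lam mu :: "nat list" and a b a' b' :: nat
  assumes "is_partition lam" and "is_partition mu"
    and "psize mu = psize lam"
    and "hamming lam mu = 2"
    and "1 \<le> a" and "a < b" and "1 \<le> a'" and "a' < b'"
    and "S_set lam - S_set mu =
           {real (part lam a) - real a + 1/2, real (part lam b) - real b + 1/2}"
    and "S_set mu - S_set lam =
           {real (part mu a') - real a' + 1/2, real (part mu b') - real b' + 1/2}"
  shows "\<exists>g1 g1' g2 g2'.
     {(g, g'). border_strip lam g \<and> border_strip mu g' \<and> young lam - g = young mu - g'}
       = {(g1, g1'), (g2, g2')} \<and> (g1, g1') \<noteq> (g2, g2')
     \<and> g1 \<subset> g2 \<and> g1' \<subset> g2'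
     \<and> int (card g1) = \<bar>int (part lam a) - int a - int (part mu a') + int a'\<bar>
     \<and> int (card g1') = \<bar>int (part lam a) - int a - int (part mu a') + int a'\<bar>
     \<and> int (card g2) = \<bar>int (part lam a) - int a - int (part mu b') + int b'\<bar>
     \<and> int (card g2') = \<bar>int (part lam a) - int a - int (part mu b') + int b'\<bar>
     \<and> (int (part lam a) - int a > int (part mu a') - int a' \<longrightarrow>
          ht g1 = int a' - int a \<and> ht g1' = int b - int b' \<and>
          ht g2 = int b' - int a - 1 \<and> ht g2' = int b - int a')
     \<and> (int (part lam a) - int a < int (part mu a') - int a' \<longrightarrow>
          ht g1 = int b' - int b \<and> ht g1' = int a - int a' \<and>
          ht g2 = int b' - int a \<and> ht g2' = int b - int a' - 1)"
proof -
  note pl = assms(1) and pm = assms(2)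
  define h where "h = (\<lambda>z::int. real_of_int z + 1/2)"
  have injh: "inj h" by (auto simp: inj_on_def h_def)
  define A1 where "A1 = fv lam a"
  define A2 where "A2 = fv lam b"
  define B1 where "B1 = fv mu a'"
  define B2 where "B2 = fv mu b'"
  have SA: "TT lam - TT mu = {A1, A2}"
  proof -
    have "h ` (TT lam - TT mu) = h ` {A1, A2}"
      using assms(9) unfolding S_TT image_set_diff[OF injh, symmetric] h_def[symmetric]
      by (simp add: h_def A1_def A2_def fv_def)
    then show ?thesis using injh inj_image_eq_iff by metis
  qed
  have SB: "TT mu - TT lam = {B1, B2}"
  proof -
    have "h ` (TT mu - TT lam) = h ` {B1, B2}"
      using assms(10) unfolding S_TT image_set_diff[OF injh, symmetric] h_def[symmetric]
      by (simp add: h_def B1_def B2_def fv_def)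
    then show ?thesis using injh inj_image_eq_iff by metis
  qed
  have A12: "A2 < A1" unfolding A1_def A2_def using fv_strict[OF pl assms(5,6)] .
  have B12: "B2 < B1" unfolding B1_def B2_def using fv_strict[OF pm assms(7,8)] .
  have mem: "A1 \<in> TT lam" "A2 \<in> TT lam" "A1 \<notin> TT mu" "A2 \<notin> TT mu"
    "B1 \<in> TT mu" "B2 \<in> TT mu" "B1 \<notin> TT lam" "B2 \<notin> TT lam"
    using SA SB by auto
  have sum: "A1 + A2 = B1 + B2"
    using sum_rel[OF pl pm assms(3) SA SB] A12 B12 by simp
  have TTmu: "TT mu = TT lam - {A1, A2} \<union> {B1, B2}" using SA SB by blast
  have TTlam: "TT lam = TT mu - {B1, B2} \<union> {A1, A2}" using SA SB by blast
  have cmu: "int (cnt (TT mu) v) = int (cnt (TT lam) v) - of_bool (v < A1) - of_bool (v < A2)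
      + of_bool (v < B1) + of_bool (v < B2)" for v
    unfolding TTmu by (rule cnt2) (use fin_above[OF pl] mem A12 B12 in auto)
  have clam: "int (cnt (TT lam) v) = int (cnt (TT mu) v) - of_bool (v < B1) - of_bool (v < B2)
      + of_bool (v < A1) + of_bool (v < A2)" for v
    by (subst TTlam, rule cnt2) (use fin_above[OF pm] mem A12 B12 in auto)
  have cA1: "int (cnt (TT lam) A1) = int a - 1" using cnt_idx[OF pl assms(5)] assms(5) by (simp add: A1_def of_nat_diff)
  have cA2: "int (cnt (TT lam) A2) = int b - 1" using cnt_idx[OF pl, of b] assms(5,6) by (simp add: A2_def of_nat_diff)
  have cB1: "int (cnt (TT mu) B1) = int a' - 1" using cnt_idx[OF pm assms(7)] assms(7) by (simp add: B1_def of_nat_diff)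
  have cB2: "int (cnt (TT mu) B2) = int b' - 1" using cnt_idx[OF pm, of b'] assms(7,8) by (simp add: B2_def of_nat_diff)
  have eA1: "int (part lam a) - int a = A1" by (simp add: A1_def fv_def)
  have eB1: "int (part mu a') - int a' = B1" by (simp add: B1_def fv_def)
  have eB2: "int (part mu b') - int b' = B2" by (simp add: B2_def fv_def)
  have "A1 \<noteq> B1" using mem by auto
  then consider (c1) "B1 < A1" | (c2) "A1 < B1" by linarith
  then show ?thesis
  proof cases
    case c1
    have o: "A2 < B2" using sum c1 by simp
    obtain s1 where s1: "is_partition s1" "TT s1 = TT lam - {A1} \<union> {B1}"
      using move_exists[OF pl mem(1) mem(7) c1] by blast
    obtain s2 where s2: "is_partition s2" "TT s2 = TT lam - {A1} \<union> {B2}"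
      using move_exists[OF pl mem(1) mem(8)] c1 B12 by auto
    have s1mu: "TT s1 = TT mu - {B2} \<union> {A2}" unfolding s1(2) TTmu using mem A12 B12 c1 o by auto
    have s2mu: "TT s2 = TT mu - {B1} \<union> {A2}" unfolding s2(2) TTmu using mem A12 B12 c1 o by auto
    note m1 = move_strip[OF pl s1(1) mem(1) mem(7) c1 s1(2)]
    note m1' = move_strip[OF pm s1(1) mem(6) mem(4) o s1mu]
    have lt2: "B2 < A1" and lt2': "A2 < B1" using A12 B12 o sum by auto
    note m2 = move_strip[OF pl s2(1) mem(1) mem(8) lt2 s2(2)]
    note m2' = move_strip[OF pm s2(1) mem(5) mem(4) lt2' s2mu]
    have inc: "young s2 \<subseteq> young s1"
      by (rule move_strip(2)[OF s1(1) s2(1), of B1 B2]) (use s1 s2 mem B12 in auto)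
    have cls: "TT sg = TT s1 \<or> TT sg = TT s2" if h: "is_partition sg" "x \<in> TT lam" "y \<notin> TT lam" "y < x" "TT sg = TT lam - {x} \<union> {y}"
        "TT sg = TT mu - {x'} \<union> {y'}" "x' \<in> TT mu" "y' \<notin> TT mu" "y' < x'" for sg x y x' y'
    proof -
      have "x \<in> {A1, A2} \<and> y \<in> {B1, B2}"
        by (rule classify[of "TT lam" x y "TT mu" x' y']) (use h SA SB A12 B12 in auto)
      then have "x = A1" "y = B1 \<or> y = B2" using h(4) o B12 by auto
      then show "TT sg = TT s1 \<or> TT sg = TT s2" using h(5) s1 s2 by auto
    qed
    have P: "{(g, g'). border_strip lam g \<and> border_strip mu g' \<and> young lam - g = young mu - g'}
    = {(young lam - young s1, young mu - young s1), (young lam - young s2, young mu - young s2)}"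
      by (rule pairs_eq[OF pl pm s1(1) s2(1) m1(1) m1'(1) m2(1) m2'(1) m1(2) m1'(2) m2(2) m2'(2) cls])
    show ?thesis
    proof (intro exI conjI impI)
      show "{(g, g'). border_strip lam g \<and> border_strip mu g' \<and> young lam - g = young mu - g'}
        = {(young lam - young s1, young mu - young s1), (young lam - young s2, young mu - young s2)}"
        by (rule P)
      have ne: "young lam - young s1 \<noteq> young lam - young s2"
      proof
        assume "young lam - young s1 = young lam - young s2"
        then show False using m1(3) m2(3) c1 B12 by simp
      qed
      then show "(young lam - young s1, young mu - young s1) \<noteq> (young lam - young s2, young mu - young s2)"
        by simp
      show "young lam - young s1 \<subset> young lam - young s2" using inc ne by blast
      have ne': "young mu - young s1 \<noteq> young mu - young s2"
      proof
        assume "young mu - young s1 = young mu - young s2"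
        then show False using m1'(3) m2'(3) sum c1 B12 by simp
      qed
      show "young mu - young s1 \<subset> young mu - young s2" using inc ne' by blast
      show "int (card (young lam - young s1)) = \<bar>int (part lam a) - int a - int (part mu a') + int a'\<bar>"
        using m1(3) eA1 eB1 c1 by simp
      show "int (card (young mu - young s1)) = \<bar>int (part lam a) - int a - int (part mu a') + int a'\<bar>"
        using m1'(3) eA1 eB1 c1 sum by simp
      show "int (card (young lam - young s2)) = \<bar>int (part lam a) - int a - int (part mu b') + int b'\<bar>"
        using m2(3) eA1 eB2 c1 B12 by simp
      show "int (card (young mu - young s2)) = \<bar>int (part lam a) - int a - int (part mu b') + int b'\<bar>"
        using m2'(3) eA1 eB2 c1 B12 o sum by simp
      have k1: "int (cnt (TT lam) B1) = int a'" using clam[of B1] cB1 c1 B12 o A12 by simp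
      have k2: "int (cnt (TT lam) B2) = int b' - 1" using clam[of B2] cB2 c1 B12 o A12 by simp
      have k3: "int (cnt (TT mu) A2) = int b" using cmu[of A2] cA2 c1 B12 o A12 by simp
      show "ht (young lam - young s1) = int a' - int a" using m1(4) k1 cA1 by simp
      show "ht (young mu - young s1) = int b - int b'" using m1'(4) k3 cB2 by simp
      show "ht (young lam - young s2) = int b' - int a - 1" using m2(4) c1 B12 k2 cA1 by simp
      show "ht (young mu - young s2) = int b - int a'" using m2'(4) c1 B12 o k3 cB1 by simp
      assume "int (part lam a) - int a < int (part mu a') - int a'"
      then show "ht (young lam - young s1) = int b' - int b" using eA1 eB1 c1 by simp
    next
      assume "int (part lam a) - int a < int (part mu a') - int a'"
      then show "ht (young mu - young s1) = int a - int a'" using eA1 eB1 c1 by simp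
    next
      assume "int (part lam a) - int a < int (part mu a') - int a'"
      then show "ht (young lam - young s2) = int b' - int a" using eA1 eB1 c1 by simp
    next
      assume "int (part lam a) - int a < int (part mu a') - int a'"
      then show "ht (young mu - young s2) = int b - int a' - 1" using eA1 eB1 c1 by simp
    qed
  next
    case c2
    have o: "B2 < A2" using sum c2 by simp
    obtain s1 where s1: "is_partition s1" "TT s1 = TT lam - {A2} \<union> {B2}"
      using move_exists[OF pl mem(2) mem(8) o] by blast
    obtain s2 where s2: "is_partition s2" "TT s2 = TT lam - {A1} \<union> {B2}"
      using move_exists[OF pl mem(1) mem(8)] o A12 by auto
    have s1mu: "TT s1 = TT mu - {B1} \<union> {A1}" unfolding s1(2) TTmu using mem A12 B12 c2 o by auto
    have s2mu: "TT s2 = TT mu - {B1} \<union> {A2}" unfolding s2(2) TTmu using mem A12 B12 c2 o by auto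
    note m1 = move_strip[OF pl s1(1) mem(2) mem(8) o s1(2)]
    note m1' = move_strip[OF pm s1(1) mem(5) mem(3) c2 s1mu]
    have lt2: "B2 < A1" and lt2': "A2 < B1" using A12 B12 o sum by auto
    note m2 = move_strip[OF pl s2(1) mem(1) mem(8) lt2 s2(2)]
    note m2' = move_strip[OF pm s2(1) mem(5) mem(4) lt2' s2mu]
    have inc: "young s2 \<subseteq> young s1"
      by (rule move_strip(2)[OF s1(1) s2(1), of A1 A2]) (use s1 s2 mem A12 B12 o in auto)
    have cls: "TT sg = TT s1 \<or> TT sg = TT s2" if h: "is_partition sg" "x \<in> TT lam" "y \<notin> TT lam" "y < x" "TT sg = TT lam - {x} \<union> {y}"
        "TT sg = TT mu - {x'} \<union> {y'}" "x' \<in> TT mu" "y' \<notin> TT mu" "y' < x'" for sg x y x' y'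
    proof -
      have "x \<in> {A1, A2} \<and> y \<in> {B1, B2}"
        by (rule classify[of "TT lam" x y "TT mu" x' y']) (use h SA SB A12 B12 in auto)
      then have "y = B2" "x = A1 \<or> x = A2" using h(4) o A12 c2 by auto
      then show "TT sg = TT s1 \<or> TT sg = TT s2" using h(5) s1 s2 by auto
    qed
    have P: "{(g, g'). border_strip lam g \<and> border_strip mu g' \<and> young lam - g = young mu - g'}
    = {(young lam - young s1, young mu - young s1), (young lam - young s2, young mu - young s2)}"
      by (rule pairs_eq[OF pl pm s1(1) s2(1) m1(1) m1'(1) m2(1) m2'(1) m1(2) m1'(2) m2(2) m2'(2) cls])
    show ?thesis
    proof (intro exI conjI impI)
      show "{(g, g'). border_strip lam g \<and> border_strip mu g' \<and> young lam - g = young mu - g'}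
        = {(young lam - young s1, young mu - young s1), (young lam - young s2, young mu - young s2)}"
        by (rule P)
      have ne: "young lam - young s1 \<noteq> young lam - young s2"
      proof
        assume "young lam - young s1 = young lam - young s2"
        then show False using m1(3) m2(3) A12 by simp
      qed
      then show "(young lam - young s1, young mu - young s1) \<noteq> (young lam - young s2, young mu - young s2)"
        by simp
      show "young lam - young s1 \<subset> young lam - young s2" using inc ne by blast
      have ne': "young mu - young s1 \<noteq> young mu - young s2"
      proof
        assume "young mu - young s1 = young mu - young s2"
        then show False using m1'(3) m2'(3) A12 by simp
      qed
      show "young mu - young s1 \<subset> young mu - young s2" using inc ne' by blast
      show "int (card (young lam - young s1)) = \<bar>int (part lam a) - int a - int (part mu a') + int a'\<bar>"
        using m1(3) eA1 eB1 c2 sum by simp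
      show "int (card (young mu - young s1)) = \<bar>int (part lam a) - int a - int (part mu a') + int a'\<bar>"
        using m1'(3) eA1 eB1 c2 by simp
      show "int (card (young lam - young s2)) = \<bar>int (part lam a) - int a - int (part mu b') + int b'\<bar>"
        using m2(3) eA1 eB2 o A12 by simp
      show "int (card (young mu - young s2)) = \<bar>int (part lam a) - int a - int (part mu b') + int b'\<bar>"
        using m2'(3) eA1 eB2 o A12 sum by simp
      have k1: "int (cnt (TT lam) B2) = int b'" using clam[of B2] cB2 c2 B12 o A12 by simp
      have k2: "int (cnt (TT mu) A1) = int a" using cmu[of A1] cA1 c2 B12 o A12 by simp
      have k3: "int (cnt (TT mu) A2) = int b - 1" using cmu[of A2] cA2 c2 B12 o A12 by simp
      assume "int (part mu a') - int a' < int (part lam a) - int a"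
      then show "ht (young lam - young s1) = int a' - int a" using eA1 eB1 c2 by simp
    next
      assume "int (part mu a') - int a' < int (part lam a) - int a"
      then show "ht (young mu - young s1) = int b - int b'" using eA1 eB1 c2 by simp
    next
      assume "int (part mu a') - int a' < int (part lam a) - int a"
      then show "ht (young lam - young s2) = int b' - int a - 1" using eA1 eB1 c2 by simp
    next
      assume "int (part mu a') - int a' < int (part lam a) - int a"
      then show "ht (young mu - young s2) = int b - int a'" using eA1 eB1 c2 by simp
    next
      have k1: "int (cnt (TT lam) B2) = int b'" using clam[of B2] cB2 c2 B12 o A12 by simp
      have k2: "int (cnt (TT mu) A1) = int a" using cmu[of A1] cA1 c2 B12 o A12 by simp
      have k3: "int (cnt (TT mu) A2) = int b - 1" using cmu[of A2] cA2 c2 B12 o A12 by simp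
      show "ht (young lam - young s1) = int b' - int b" using m1(4) k1 cA2 by simp
      show "ht (young mu - young s1) = int a - int a'" using m1'(4) k2 cB1 by simp
      show "ht (young lam - young s2) = int b' - int a" using m2(4) o A12 k1 cA1 by simp
      show "ht (young mu - young s2) = int b - int a' - 1" using m2'(4) o A12 k3 cB1 by simp
    qed
  qed
qed

end
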